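(* The presentations $$\mathcal P_1=\langle a,b,c,d,r,s\mid ab\bar a r,\ \bar r\bar b c s,\ \bar s d\bar c\bar d\rangle,\qquad \mathcal P_2=\langle a,b,c,d,r,s,t,u,v\mid abr,\ \bar r\bar a s,\ \bar s\bar b t,\ \bar t c u,\ \bar u d v,\ \bar v\bar c\bar d\rangle$$ (where $\bar x=x^{-1}$) are of small cancellation type $C(4)$–$T(5)$ and $C(3)$–$T(7)$ respectively, both present the fundamental group of the closed orientable surface of genus two, and neither is a Dehn presentation.
   Context: $C(p)$ and $T(q)$ are the standard small cancellation conditions (no relator in the symmetrized closure is a product of fewer than $p$ pieces; $T(q)$ is the standard condition on cycles of relators of length between 3 and $q-1$). A presentation is a Dehn presentation if every nonempty cyclically reduced word representing the identity contains a subword $v$ of (a cyclic permutation of) some relator $r^{\pm1}$ with $|v|>|r|/2$. *)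

theory Defs
  imports "HOL-Algebra.Group"
begin

type_synonym 'a letter = "'a \<times> bool"   (* (x, True) = x, (x, False) = x^-1 *)
type_synonym 'a word = "'a letter list"

definition linv :: "'a letter \<Rightarrow> 'a letter" where
  "linv l = (fst l, \<not> snd l)"

definition winv :: "'a word \<Rightarrow> 'a word" where
  "winv w = rev (map linv w)"

definition words_on :: "'a set \<Rightarrow> 'a word set" where
  "words_on X = {w. fst ` set w \<subseteq> X}"

definition freely_reduced :: "'a word \<Rightarrow> bool" where
  "freely_reduced w \<longleftrightarrow> (\<forall>i. Suc i < length w \<longrightarrow> w ! Suc i \<noteq> linv (w ! i))"

definition cyc_reduced :: "'a word \<Rightarrow> bool" where
  "cyc_reduced w \<longleftrightarrow> freely_reduced w \<and> (w \<noteq> [] \<longrightarrow> last w \<noteq> linv (hd w))"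

text \<open>Symmetrized closure: all cyclic permutations of the relators and their inverses
  (the relators considered below are cyclically reduced).\<close>
definition symm_closure :: "'a word set \<Rightarrow> 'a word set" where
  "symm_closure R = {rotate k r | k r. r \<in> R \<union> winv ` R}"

definition piece :: "'a word set \<Rightarrow> 'a word \<Rightarrow> bool" where
  "piece R p \<longleftrightarrow> p \<noteq> [] \<and> (\<exists>r1 r2 u1 u2. r1 \<in> symm_closure R \<and> r2 \<in> symm_closure R
      \<and> r1 \<noteq> r2 \<and> r1 = p @ u1 \<and> r2 = p @ u2)"

definition C_cond :: "nat \<Rightarrow> 'a word set \<Rightarrow> bool" where
  "C_cond p R \<longleftrightarrow> (\<forall>r \<in> symm_closure R. \<forall>ps. concat ps = r \<and> (\<forall>q \<in> set ps. piece R q)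
      \<longrightarrow> p \<le> length ps)"

text \<open>T(q) (Lyndon--Schupp): for 3 <= h < q and r_1,...,r_h in the symmetrized closure with
  no cyclically successive pair an inverse pair, at least one of the products
  r_1 r_2, ..., r_{h-1} r_h, r_h r_1 is freely reduced without cancellation.\<close>
definition T_cond :: "nat \<Rightarrow> 'a word set \<Rightarrow> bool" where
  "T_cond q R \<longleftrightarrow> (\<forall>h. 3 \<le> h \<and> h < q \<longrightarrow>
      (\<forall>rs :: nat \<Rightarrow> 'a word.
         (\<forall>i<h. rs i \<in> symm_closure R) \<and> (\<forall>i<h. rs (Suc i mod h) \<noteq> winv (rs i))
         \<longrightarrow> (\<exists>i<h. last (rs i) \<noteq> linv (hd (rs (Suc i mod h))))))"

definition pres_step :: "'a set \<Rightarrow> 'a word set \<Rightarrow> 'a word \<Rightarrow> 'a word \<Rightarrow> bool" where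
  "pres_step X R u w \<longleftrightarrow>
     (\<exists>p q l. fst l \<in> X \<and> u = p @ q \<and> w = p @ [l, linv l] @ q) \<or>
     (\<exists>p q r. r \<in> R \<and> u = p @ q \<and> w = p @ r @ q)"

definition pres_eq :: "'a set \<Rightarrow> 'a word set \<Rightarrow> 'a word \<Rightarrow> 'a word \<Rightarrow> bool" where
  "pres_eq X R = equivclp (pres_step X R)"

definition pres_class :: "'a set \<Rightarrow> 'a word set \<Rightarrow> 'a word \<Rightarrow> 'a word set" where
  "pres_class X R w = {w'. pres_eq X R w w'}"

definition pres_group :: "'a set \<Rightarrow> 'a word set \<Rightarrow> 'a word set monoid" where
  "pres_group X R =
     \<lparr>carrier = pres_class X R ` words_on X,
      mult = (\<lambda>A B. pres_class X R ((SOME u. u \<in> A) @ (SOME v. v \<in> B))),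
      one = pres_class X R []\<rparr>"

definition dehn_presentation :: "'a set \<Rightarrow> 'a word set \<Rightarrow> bool" where
  "dehn_presentation X R \<longleftrightarrow>
     (\<forall>w \<in> words_on X. w \<noteq> [] \<and> cyc_reduced w \<and> pres_eq X R w [] \<longrightarrow>
        (\<exists>v r. r \<in> symm_closure R \<and> (\<exists>p q. w = p @ v @ q) \<and> (\<exists>p q. r = p @ v @ q)
               \<and> length r < 2 * length v))"

datatype gen = Ga | Gb | Gc | Gd | Gr | Gs | Gt | Gu | Gv

abbreviation P :: "gen \<Rightarrow> gen letter" where "P x \<equiv> (x, True)"
abbreviation N :: "gen \<Rightarrow> gen letter" where "N x \<equiv> (x, False)"

text \<open>Standard presentation of the fundamental group of the closed orientable surface of genus 2.\<close>
definition X0 :: "gen set" where "X0 = {Ga, Gb, Gc, Gd}"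
definition R0 :: "gen word set" where
  "R0 = {[P Ga, P Gb, N Ga, N Gb, P Gc, P Gd, N Gc, N Gd]}"

definition X1 :: "gen set" where "X1 = {Ga, Gb, Gc, Gd, Gr, Gs}"
definition R1 :: "gen word set" where
  "R1 = {[P Ga, P Gb, N Ga, P Gr], [N Gr, N Gb, P Gc, P Gs], [N Gs, P Gd, N Gc, N Gd]}"

definition X2 :: "gen set" where "X2 = {Ga, Gb, Gc, Gd, Gr, Gs, Gt, Gu, Gv}"
definition R2 :: "gen word set" where
  "R2 = {[P Ga, P Gb, P Gr], [N Gr, N Ga, P Gs], [N Gs, N Gb, P Gt],
         [N Gt, P Gc, P Gu], [N Gu, P Gd, P Gv], [N Gv, N Gc, N Gd]}"

end

theory Submission
  imports Defs
begin

lemma linv_linv[simp]: "linv (linv l) = l" by (simp add: linv_def)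
lemma fst_linv[simp]: "fst (linv l) = fst l" by (simp add: linv_def)
lemma winv_Nil[simp]: "winv [] = []" by (simp add: winv_def)
lemma winv_Cons[simp]: "winv (x # u) = winv u @ [linv x]" by (simp add: winv_def)
lemma winv_append[simp]: "winv (u @ v) = winv v @ winv u" by (simp add: winv_def)
lemma winv_winv[simp]: "winv (winv u) = u" by (induct u) auto
lemma words_on_Nil[simp]: "[] \<in> words_on X" by (simp add: words_on_def)
lemma words_on_Cons[simp]: "x # u \<in> words_on X \<longleftrightarrow> fst x \<in> X \<and> u \<in> words_on X"
  by (auto simp: words_on_def)
lemma words_on_append[simp]: "u @ v \<in> words_on X \<longleftrightarrow> u \<in> words_on X \<and> v \<in> words_on X"
  by (auto simp: words_on_def)
lemma words_on_winv[simp]: "winv u \<in> words_on X \<longleftrightarrow> u \<in> words_on X"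
  by (induct u) auto

section \<open>Equivalence in presentations\<close>

lemma equivclp_map:
  assumes "\<And>u v. r u v \<Longrightarrow> equivclp s (f u) (f v)" and "equivclp r a b"
  shows "equivclp s (f a) (f b)"
  using assms(2)
proof (induct rule: equivclp_induct)
  case base then show ?case by (rule equivclp_refl)
next
  case (step y z)
  have "equivclp s (f y) (f z)"
  proof (cases "r y z")
    case True then show ?thesis by (rule assms(1))
  next
    case False
    with step(2) have "r z y" by (elim disjE) auto
    then show ?thesis by (rule equivclp_sym[OF assms(1)])
  qed
  then show ?case by (rule equivclp_trans[OF step(3)])
qed

lemma pe_refl[simp]: "pres_eq X R u u" by (simp add: pres_eq_def)
lemma pe_sym: "pres_eq X R u v \<Longrightarrow> pres_eq X R v u"
  by (simp add: pres_eq_def equivclp_sym)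
lemma pe_trans: "pres_eq X R u v \<Longrightarrow> pres_eq X R v w \<Longrightarrow> pres_eq X R u w"
  unfolding pres_eq_def by (rule equivclp_trans)

lemma step_ctx: "pres_step X R u v \<Longrightarrow> pres_step X R (x @ u @ y) (x @ v @ y)"
  unfolding pres_step_def
  apply (elim disjE exE conjE)
   apply (rule disjI1, rule_tac x="x @ p" in exI, rule_tac x="q @ y" in exI, auto)[1]
  apply (rule disjI2, rule_tac x="x @ p" in exI, rule_tac x="q @ y" in exI, auto)[1]
  done

lemma pe_ctx: "pres_eq X R u v \<Longrightarrow> pres_eq X R (x @ u @ y) (x @ v @ y)"
  unfolding pres_eq_def
  by (rule equivclp_map[where f="\<lambda>w. x @ w @ y"]) (auto intro: step_ctx)

lemma pe_app:
  assumes "pres_eq X R u u'" "pres_eq X R v v'"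
  shows "pres_eq X R (u @ v) (u' @ v')"
proof -
  have 1: "pres_eq X R (u @ v) (u' @ v)" using pe_ctx[OF assms(1), where x="[]" and y=v] by simp
  have 2: "pres_eq X R (u' @ v) (u' @ v')" using pe_ctx[OF assms(2), where x=u' and y="[]"] by simp
  show ?thesis by (rule pe_trans[OF 1 2])
qed

lemma pe_cancel: "fst l \<in> X \<Longrightarrow> pres_eq X R (p @ [l, linv l] @ q) (p @ q)"
  unfolding pres_eq_def pres_step_def by (rule converse_r_into_equivclp) blast

lemma pe_rel: "r \<in> R \<Longrightarrow> pres_eq X R (p @ r @ q) (p @ q)"
  unfolding pres_eq_def pres_step_def by (rule converse_r_into_equivclp) blast

fun red_aux :: "'a word \<Rightarrow> 'a word \<Rightarrow> 'a word" where
  "red_aux acc [] = rev acc"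
| "red_aux [] (y # ys) = red_aux [y] ys"
| "red_aux (x # acc) (y # ys) = (if y = linv x then red_aux acc ys else red_aux (y # x # acc) ys)"

definition red :: "'a word \<Rightarrow> 'a word" where "red w = red_aux [] w"

lemma red_aux_sound: "rev acc @ ys \<in> words_on X \<Longrightarrow> pres_eq X R (rev acc @ ys) (red_aux acc ys)"
proof (induct acc ys rule: red_aux.induct)
  case (1 acc) then show ?case by simp
next
  case (2 y ys) then show ?case by simp
next
  case (3 x acc y ys)
  show ?case
  proof (cases "y = linv x")
    case True
    have a: "pres_eq X R (rev acc @ [x, linv x] @ ys) (rev acc @ ys)"
      using 3(3) by (intro pe_cancel) simp
    have b: "pres_eq X R (rev acc @ ys) (red_aux acc ys)"
      using 3 True by simp
    show ?thesis using True pe_trans[OF a b] by simp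
  next
    case False then show ?thesis using 3 by simp
  qed
qed

lemma red_sound: "w \<in> words_on X \<Longrightarrow> pres_eq X R w (red w)"
  using red_aux_sound[of "[]" w X R] by (simp add: red_def)

lemma red_aux_set: "set (red_aux acc ys) \<subseteq> set acc \<union> set ys"
  by (induct acc ys rule: red_aux.induct) auto

lemma red_words: "w \<in> words_on X \<Longrightarrow> red w \<in> words_on X"
  using red_aux_set[of "[]" w] by (auto simp: red_def words_on_def)

lemma pe_inv_cancel: "u \<in> words_on X \<Longrightarrow> pres_eq X R (u @ winv u) []"
proof (induct u)
  case Nil then show ?case by simp
next
  case (Cons x u)
  have a: "pres_eq X R ([x] @ (u @ winv u) @ [linv x]) ([x] @ [] @ [linv x])"
    using Cons by (intro pe_ctx) simp
  have b: "pres_eq X R ([] @ [x, linv x] @ []) ([] @ [])"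
    using Cons by (intro pe_cancel) simp
  show ?case using pe_trans[OF a, of "[]"] b by simp
qed

lemma pe_inv_cancel2: "u \<in> words_on X \<Longrightarrow> pres_eq X R (winv u @ u) []"
  using pe_inv_cancel[of "winv u" X R] by simp

lemma pe_solve_right:
  assumes "pres_eq X R (u @ v) []" "u \<in> words_on X" "v \<in> words_on X"
  shows "pres_eq X R v (winv u)"
proof -
  have A: "pres_eq X R (winv u @ u @ v) v"
    using pe_ctx[OF pe_inv_cancel2[OF assms(2)], where x="[]" and y=v] by simp
  have B: "pres_eq X R (winv u @ u @ v) (winv u)"
    using pe_ctx[OF assms(1), where x="winv u" and y="[]"] by simp
  show ?thesis using pe_trans[OF pe_sym[OF A] B] .
qed

lemma pe_solve_left:
  assumes "pres_eq X R (u @ v) []" "u \<in> words_on X" "v \<in> words_on X"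
  shows "pres_eq X R u (winv v)"
proof -
  have A: "pres_eq X R (u @ v @ winv v) u"
    using pe_ctx[OF pe_inv_cancel[OF assms(3)], where x=u and y="[]"] by simp
  have B: "pres_eq X R (u @ v @ winv v) (winv v)"
    using pe_ctx[OF assms(1), where x="[]" and y="winv v"] by simp
  show ?thesis using pe_trans[OF pe_sym[OF A] B] .
qed

lemma pe_rot:
  assumes "pres_eq X R (x @ y) []" "x \<in> words_on X" "y \<in> words_on X"
  shows "pres_eq X R (y @ x) []"
proof -
  have "pres_eq X R (y @ x) (winv x @ x)"
    using pe_app[OF pe_solve_right[OF assms] pe_refl] .
  then show ?thesis using pe_inv_cancel2[OF assms(2)] pe_trans by blast
qed

lemma pe_winv:
  assumes "pres_eq X R u v" "u \<in> words_on X" "v \<in> words_on X"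
  shows "pres_eq X R (winv u) (winv v)"
proof -
  have A: "pres_eq X R (winv u @ u @ winv v) (winv u @ v @ winv v)"
    using assms by (intro pe_ctx)
  have B: "pres_eq X R (winv u @ u @ winv v) (winv v)"
    using pe_ctx[OF pe_inv_cancel2[OF assms(2)], where x="[]" and y="winv v"] by simp
  have C: "pres_eq X R (winv u @ v @ winv v) (winv u)"
    using pe_ctx[OF pe_inv_cancel[OF assms(3)], where x="winv u" and y="[]"] by simp
  show ?thesis using pe_trans[OF pe_trans[OF pe_sym[OF C] pe_sym[OF A]] B] .
qed

lemma symm_closure_trivial:
  assumes "R \<subseteq> words_on X" "\<rho> \<in> symm_closure R"
  shows "\<rho> \<in> words_on X \<and> pres_eq X R \<rho> []"
proof -
  obtain k r where r: "\<rho> = rotate k r" "r \<in> R \<union> winv ` R"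
    using assms(2) by (auto simp: symm_closure_def)
  have rw: "r \<in> words_on X" using r(2) assms(1) by auto
  have rt: "pres_eq X R r []"
  proof (cases "r \<in> R")
    case True then show ?thesis using pe_rel[of r R X "[]" "[]"] by simp
  next
    case False
    then obtain r0 where r0: "r0 \<in> R" "r = winv r0" using r(2) by auto
    have "pres_eq X R (winv r0 @ [] @ []) (winv r0 @ r0 @ [])"
      using pe_ctx[OF pe_sym[OF pe_rel[OF r0(1), of X "[]" "[]"]], of "winv r0" "[]"] by simp
    moreover have "r0 \<in> words_on X" using r0 assms(1) by blast
    ultimately show ?thesis using r0 pe_trans[OF _ pe_inv_cancel2[of r0 X R]] by simp
  qed
  let ?m = "k mod length r"
  have e: "\<rho> = drop ?m r @ take ?m r" using r(1) by (simp add: rotate_drop_take)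
  have "pres_eq X R (take ?m r @ drop ?m r) []" using rt by simp
  moreover have "take ?m r \<in> words_on X" "drop ?m r \<in> words_on X"
    using rw by (auto simp: words_on_def dest: in_set_takeD in_set_dropD)
  ultimately have "pres_eq X R \<rho> []" using e pe_rot[where x="take ?m r" and y="drop ?m r"] by simp
  moreover have "\<rho> \<in> words_on X" using rw r(1) by (simp add: words_on_def)
  ultimately show ?thesis by simp
qed

section \<open>Substitution morphisms\<close>

definition lsub :: "('a \<Rightarrow> 'a word) \<Rightarrow> 'a letter \<Rightarrow> 'a word" where
  "lsub \<phi> l = (if snd l then \<phi> (fst l) else winv (\<phi> (fst l)))"

definition subst :: "('a \<Rightarrow> 'a word) \<Rightarrow> 'a word \<Rightarrow> 'a word" where
  "subst \<phi> w = concat (map (lsub \<phi>) w)"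

lemma subst_Nil[simp]: "subst \<phi> [] = []" by (simp add: subst_def)
lemma subst_Cons[simp]: "subst \<phi> (l # w) = lsub \<phi> l @ subst \<phi> w" by (simp add: subst_def)
lemma subst_append[simp]: "subst \<phi> (u @ v) = subst \<phi> u @ subst \<phi> v" by (simp add: subst_def)
lemma lsub_linv[simp]: "lsub \<phi> (linv l) = winv (lsub \<phi> l)" by (simp add: lsub_def linv_def)
lemma subst_winv[simp]: "subst \<phi> (winv w) = winv (subst \<phi> w)" by (induct w) auto

lemma lsub_words: "\<forall>x\<in>X. \<phi> x \<in> words_on X' \<Longrightarrow> fst l \<in> X \<Longrightarrow> lsub \<phi> l \<in> words_on X'"
  by (simp add: lsub_def)

lemma subst_words: "\<forall>x\<in>X. \<phi> x \<in> words_on X' \<Longrightarrow> w \<in> words_on X \<Longrightarrow> subst \<phi> w \<in> words_on X'"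
  by (induct w) (auto simp: lsub_words)

lemma subst_step:
  assumes H1: "\<forall>x\<in>X. \<phi> x \<in> words_on X'" and H2: "\<forall>r\<in>R. pres_eq X' R' (subst \<phi> r) []"
    and st: "pres_step X R u v"
  shows "pres_eq X' R' (subst \<phi> u) (subst \<phi> v)"
  using st unfolding pres_step_def
proof (elim disjE exE conjE)
  fix p q l assume l: "fst l \<in> X" and u: "u = p @ q" and v: "v = p @ [l, linv l] @ q"
  have "lsub \<phi> l \<in> words_on X'" using lsub_words[OF H1 l] .
  then have "pres_eq X' R' (subst \<phi> p @ (lsub \<phi> l @ winv (lsub \<phi> l)) @ subst \<phi> q) (subst \<phi> p @ [] @ subst \<phi> q)"
    by (intro pe_ctx pe_inv_cancel)
  then have "pres_eq X' R' (subst \<phi> v) (subst \<phi> u)" using u v by simp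
  then show ?thesis by (rule pe_sym)
next
  fix p q r assume r: "r \<in> R" and u: "u = p @ q" and v: "v = p @ r @ q"
  have "pres_eq X' R' (subst \<phi> p @ subst \<phi> r @ subst \<phi> q) (subst \<phi> p @ [] @ subst \<phi> q)"
    using H2 r by (intro pe_ctx) simp
  then have "pres_eq X' R' (subst \<phi> v) (subst \<phi> u)" using u v by simp
  then show ?thesis by (rule pe_sym)
qed

lemma subst_resp:
  assumes H1: "\<forall>x\<in>X. \<phi> x \<in> words_on X'" and H2: "\<forall>r\<in>R. pres_eq X' R' (subst \<phi> r) []"
    and e: "pres_eq X R u v"
  shows "pres_eq X' R' (subst \<phi> u) (subst \<phi> v)"
proof -
  have "\<And>u v. pres_step X R u v \<Longrightarrow> equivclp (pres_step X' R') (subst \<phi> u) (subst \<phi> v)"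
    using subst_step[OF H1 H2] unfolding pres_eq_def .
  from equivclp_map[where f="subst \<phi>", OF this e[unfolded pres_eq_def]]
  show ?thesis unfolding pres_eq_def .
qed

lemma subst_back:
  assumes H1: "\<forall>x\<in>X. \<phi> x \<in> words_on X'" and H3: "\<forall>x\<in>X'. \<psi> x \<in> words_on X"
    and H5: "\<forall>x\<in>X. pres_eq X R (subst \<psi> (\<phi> x)) [(x, True)]"
    and w: "w \<in> words_on X"
  shows "pres_eq X R (subst \<psi> (subst \<phi> w)) w"
  using w
proof (induct w)
  case Nil then show ?case by simp
next
  case (Cons l w)
  obtain x b where l: "l = (x, b)" by (cases l)
  have x: "x \<in> X" using Cons l by simp
  have sw: "subst \<psi> (\<phi> x) \<in> words_on X" using subst_words[OF H3, of "\<phi> x"] H1 x by blast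
  have hx: "pres_eq X R (subst \<psi> (\<phi> x)) [(x, True)]" using H5 x by blast
  have "pres_eq X R (subst \<psi> (lsub \<phi> l)) [l]"
  proof (cases b)
    case True then show ?thesis using hx l by (simp add: lsub_def)
  next
    case False
    have "pres_eq X R (winv (subst \<psi> (\<phi> x))) (winv [(x, True)])"
      using pe_winv[OF hx sw] x by simp
    then show ?thesis using False l by (simp add: lsub_def linv_def)
  qed
  then have "pres_eq X R (subst \<psi> (lsub \<phi> l) @ subst \<psi> (subst \<phi> w)) ([l] @ w)"
    using Cons by (intro pe_app) simp_all
  then show ?case by simp
qed

section \<open>Isomorphism of presented groups\<close>

lemma class_eq: "pres_class X R u = pres_class X R v \<longleftrightarrow> pres_eq X R u v"
proof
  assume "pres_class X R u = pres_class X R v"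
  then have "v \<in> pres_class X R u" by (simp add: pres_class_def)
  then show "pres_eq X R u v" by (simp add: pres_class_def)
next
  assume e: "pres_eq X R u v"
  show "pres_class X R u = pres_class X R v"
    unfolding pres_class_def using e pe_trans pe_sym by blast
qed

lemma some_class: "pres_eq X R u (SOME u'. u' \<in> pres_class X R u)"
proof -
  have "u \<in> pres_class X R u" by (simp add: pres_class_def)
  then have "(SOME u'. u' \<in> pres_class X R u) \<in> pres_class X R u" by (rule someI)
  then show ?thesis by (simp add: pres_class_def)
qed

lemma mult_class:
  "mult (pres_group X R) (pres_class X R u) (pres_class X R v) = pres_class X R (u @ v)"
  unfolding pres_group_def
  using pe_app[OF pe_sym[OF some_class[of X R u]] pe_sym[OF some_class[of X R v]]]
  by (simp add: class_eq)

lemma iso_by_subst: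
  assumes H1: "\<forall>x\<in>X. \<phi> x \<in> words_on X'" and H2: "\<forall>r\<in>R. pres_eq X' R' (subst \<phi> r) []"
    and H3: "\<forall>x\<in>X'. \<psi> x \<in> words_on X" and H4: "\<forall>r\<in>R'. pres_eq X R (subst \<psi> r) []"
    and H5: "\<forall>x\<in>X. pres_eq X R (subst \<psi> (\<phi> x)) [(x, True)]"
    and H6: "\<forall>x\<in>X'. pres_eq X' R' (subst \<phi> (\<psi> x)) [(x, True)]"
  shows "pres_group X R \<cong> pres_group X' R'"
proof -
  define h where "h A = pres_class X' R' (subst \<phi> (SOME u. u \<in> A))" for A
  have hc: "h (pres_class X R w) = pres_class X' R' (subst \<phi> w)" for w
    unfolding h_def class_eq
    by (rule pe_sym, rule subst_resp[OF H1 H2], rule some_class)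
  have car: "carrier (pres_group X R) = pres_class X R ` words_on X"
    "carrier (pres_group X' R') = pres_class X' R' ` words_on X'"
    by (simp_all add: pres_group_def)
  have hom: "h \<in> hom (pres_group X R) (pres_group X' R')"
    unfolding hom_def
  proof (intro CollectI conjI ballI)
    show "h \<in> carrier (pres_group X R) \<rightarrow> carrier (pres_group X' R')"
      unfolding car using hc subst_words[OF H1] by auto
  next
    fix A B assume "A \<in> carrier (pres_group X R)" "B \<in> carrier (pres_group X R)"
    then obtain a b where "A = pres_class X R a" "B = pres_class X R b" unfolding car by auto
    then show "h (A \<otimes>\<^bsub>pres_group X R\<^esub> B) = h A \<otimes>\<^bsub>pres_group X' R'\<^esub> h B"
      by (simp add: mult_class hc)
  qed
  have inj: "inj_on h (carrier (pres_group X R))"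
  proof (rule inj_onI)
    fix A B assume "A \<in> carrier (pres_group X R)" "B \<in> carrier (pres_group X R)" and e: "h A = h B"
    then obtain a b where ab: "A = pres_class X R a" "B = pres_class X R b"
      "a \<in> words_on X" "b \<in> words_on X" unfolding car by auto
    have "pres_eq X' R' (subst \<phi> a) (subst \<phi> b)" using e ab hc class_eq by metis
    then have "pres_eq X R (subst \<psi> (subst \<phi> a)) (subst \<psi> (subst \<phi> b))"
      by (rule subst_resp[OF H3 H4])
    then have "pres_eq X R a b"
      using subst_back[OF H1 H3 H5 ab(3)] subst_back[OF H1 H3 H5 ab(4)] pe_trans pe_sym by metis
    then show "A = B" using ab class_eq by metis
  qed
  have surj: "h ` carrier (pres_group X R) = carrier (pres_group X' R')"
  proof
    show "h ` carrier (pres_group X R) \<subseteq> carrier (pres_group X' R')"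
      using hom unfolding hom_def by auto
  next
    show "carrier (pres_group X' R') \<subseteq> h ` carrier (pres_group X R)"
    proof
      fix B assume "B \<in> carrier (pres_group X' R')"
      then obtain b where b: "B = pres_class X' R' b" "b \<in> words_on X'" unfolding car by auto
      have "pres_eq X' R' (subst \<phi> (subst \<psi> b)) b"
        using subst_back[OF H3 H1 H6 b(2)] .
      then have "h (pres_class X R (subst \<psi> b)) = B" using hc b class_eq by metis
      moreover have "pres_class X R (subst \<psi> b) \<in> carrier (pres_group X R)"
        using subst_words[OF H3 b(2)] car by auto
      ultimately show "B \<in> h ` carrier (pres_group X R)" by force
    qed
  qed
  have "h \<in> iso (pres_group X R) (pres_group X' R')"
    unfolding iso_def bij_betw_def using hom inj surj by simp
  then show ?thesis by (rule is_isoI)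
qed

section \<open>Computational checks\<close>

definition rotd :: "nat \<Rightarrow> 'a word \<Rightarrow> 'a word" where "rotd k r = drop k r @ take k r"

definition sc_list :: "'a word list \<Rightarrow> 'a word list" where
  "sc_list rs = concat (map (\<lambda>r. map (\<lambda>k. rotd k r) [0..<Suc (length r)]) (rs @ map winv rs))"

lemma mem_concat_map: "x \<in> set (concat (map f xs)) \<longleftrightarrow> (\<exists>y\<in>set xs. x \<in> set (f y))"
  by (induct xs) auto

lemma mem_map_upt: "x \<in> set (map g [0..<n]) \<longleftrightarrow> (\<exists>k<n. x = g k)"
  by (simp add: image_iff Bex_def)

lemma sc_list_mem:
  "\<rho> \<in> set (sc_list rs) \<longleftrightarrow> (\<exists>r\<in>set (rs @ map winv rs). \<exists>k<Suc (length r). \<rho> = rotd k r)"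
  unfolding sc_list_def mem_concat_map mem_map_upt ..

lemma symm_closure_list: "symm_closure (set rs) = set (sc_list rs)"
proof
  show "symm_closure (set rs) \<subseteq> set (sc_list rs)"
  proof
    fix \<rho> assume "\<rho> \<in> symm_closure (set rs)"
    then obtain k r where r: "\<rho> = rotate k r" "r \<in> set rs \<union> winv ` set rs"
      unfolding symm_closure_def by blast
    define m where "m = (if r = [] then 0 else k mod length r)"
    have ml: "m < Suc (length r)"
      unfolding m_def by (cases "r = []") (auto intro: less_SucI)
    have me: "\<rho> = rotd m r"
      using r(1) unfolding m_def rotd_def by (cases "r = []") (simp_all add: rotate_drop_take)
    have "r \<in> set (rs @ map winv rs)" using r(2) by (simp add: image_iff)
    then show "\<rho> \<in> set (sc_list rs)" unfolding sc_list_mem using ml me by blast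
  qed
next
  show "set (sc_list rs) \<subseteq> symm_closure (set rs)"
  proof
    fix \<rho> assume "\<rho> \<in> set (sc_list rs)"
    then obtain r k where r: "r \<in> set (rs @ map winv rs)"
      and k: "k < Suc (length r)" "\<rho> = rotd k r"
      unfolding sc_list_mem by blast
    have "\<rho> = rotate k r"
    proof (cases "k = length r")
      case True then show ?thesis using k by (simp add: rotd_def)
    next
      case False then show ?thesis using k by (simp add: rotate_drop_take rotd_def)
    qed
    moreover have "r \<in> set rs \<union> winv ` set rs" using r by (simp add: image_iff)
    ultimately show "\<rho> \<in> symm_closure (set rs)" unfolding symm_closure_def by blast
  qed
qed

lemma length_concat_ones: "\<forall>q\<in>set ps. length q = 1 \<Longrightarrow> length (concat ps) = length ps"
  by (induct ps) auto

lemma C_from_check: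
  assumes sc: "symm_closure R = set L"
    and pc: "\<forall>r1\<in>set L. \<forall>r2\<in>set L. r1 \<noteq> r2 \<longrightarrow> take 2 r1 \<noteq> take 2 r2"
    and len: "\<forall>r\<in>set L. length r = n" and pn: "p \<le> n"
  shows "C_cond p R"
proof -
  have pl: "length q = 1" if pq: "piece R q" for q
  proof (rule ccontr)
    assume ne: "length q \<noteq> 1"
    obtain r1 r2 u1 u2 where rr: "r1 \<in> set L" "r2 \<in> set L" "r1 \<noteq> r2" "r1 = q @ u1" "r2 = q @ u2"
      and qn: "q \<noteq> []" using pq unfolding piece_def sc by blast
    have "length q > 0" using qn by simp
    then have "2 \<le> length q" using ne by linarith
    then have "take 2 r1 = take 2 r2" using rr by simp
    then show False using pc rr by blast
  qed
  show ?thesis unfolding C_cond_def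
  proof (intro ballI allI impI)
    fix r ps assume r: "r \<in> symm_closure R" and h: "concat ps = r \<and> (\<forall>q\<in>set ps. piece R q)"
    then have "length r = length ps" using pl length_concat_ones by blast
    then show "p \<le> length ps" using r sc len pn by auto
  qed
qed

definition Erel :: "'a word \<Rightarrow> 'a word \<Rightarrow> bool" where
  "Erel x y \<longleftrightarrow> last x = linv (hd y) \<and> y \<noteq> winv x"

fun reach :: "'a word list \<Rightarrow> nat \<Rightarrow> 'a word \<Rightarrow> 'a word list" where
  "reach L 0 x = [x]"
| "reach L (Suc k) x = filter (\<lambda>y. \<exists>z\<in>set (reach L k x). Erel z y) L"

lemma T_from_check:
  assumes sc: "symm_closure R = set L"
    and chk: "\<forall>x\<in>set L. \<forall>h\<in>set [3..<q]. x \<notin> set (reach L h x)"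
  shows "T_cond q R"
  unfolding T_cond_def
proof (intro allI impI)
  fix h and rs :: "nat \<Rightarrow> 'a word"
  assume hq: "3 \<le> h \<and> h < q"
    and a: "(\<forall>i<h. rs i \<in> symm_closure R) \<and> (\<forall>i<h. rs (Suc i mod h) \<noteq> winv (rs i))"
  show "\<exists>i<h. last (rs i) \<noteq> linv (hd (rs (Suc i mod h)))"
  proof (rule ccontr)
    assume "\<not> ?thesis"
    then have E: "Erel (rs i) (rs (Suc i mod h))" if "i < h" for i
      using a that unfolding Erel_def by auto
    have inL: "rs i \<in> set L" if "i < h" for i using a sc that by auto
    have "rs (k mod h) \<in> set (reach L k (rs 0))" if "k \<le> h" for k
      using that
    proof (induct k)
      case 0 then show ?case by simp
    next
      case (Suc k)
      then have kh: "k < h" by simp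
      then have "rs k \<in> set (reach L k (rs 0))" using Suc by simp
      moreover have "Suc k mod h < h" using kh by simp
      ultimately show ?case using E[OF kh] inL by auto
    qed
    then have "rs 0 \<in> set (reach L h (rs 0))" using hq by (metis le_refl mod_self)
    moreover have "rs 0 \<in> set L" using inL hq by simp
    ultimately show False using chk hq by auto
  qed
qed

fun fr :: "'a word \<Rightarrow> bool" where
  "fr (x # y # ys) = (y \<noteq> linv x \<and> fr (y # ys))"
| "fr _ = True"

lemma fr_freely_reduced: "fr w \<Longrightarrow> freely_reduced w"
proof (induct w rule: fr.induct)
  case (1 x y ys)
  show ?case unfolding freely_reduced_def
  proof (intro allI impI)
    fix i assume i: "Suc i < length (x # y # ys)"
    show "(x # y # ys) ! Suc i \<noteq> linv ((x # y # ys) ! i)"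
    proof (cases i)
      case 0 then show ?thesis using 1 by simp
    next
      case (Suc j)
      then show ?thesis using 1 i unfolding freely_reduced_def by auto
    qed
  qed
qed (auto simp: freely_reduced_def)

definition wins :: "nat \<Rightarrow> 'a word \<Rightarrow> 'a word list" where
  "wins m w = map (\<lambda>i. take m (drop i w)) [0..<Suc (length w - m)]"

lemma win_mem:
  assumes "w = p @ v @ q" "m \<le> length v"
  shows "take m v \<in> set (wins m w)"
proof -
  have "take m v = (\<lambda>i. take m (drop i w)) (length p)" using assms by simp
  moreover have "length p \<in> set [0..<Suc (length w - m)]"
    using assms(2) unfolding assms(1) by (simp only: set_upt atLeastLessThan_iff length_append) linarith
  ultimately show ?thesis unfolding wins_def set_map by (rule image_eqI)
qed

lemma nondehn_from_check:
  assumes w: "w \<in> words_on X" "w \<noteq> []" "fr w" "last w \<noteq> linv (hd w)" "pres_eq X R w []"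
    and sc: "symm_closure R = set L"
    and len: "\<forall>r\<in>set L. 2 * m \<le> length r + 2"
    and chk: "\<forall>x\<in>set (wins m w). \<forall>r\<in>set L. x \<notin> set (wins m r)"
  shows "\<not> dehn_presentation X R"
proof
  assume "dehn_presentation X R"
  moreover have "cyc_reduced w" unfolding cyc_reduced_def using w fr_freely_reduced by blast
  ultimately obtain v r p q p' q' where
    vr: "r \<in> set L" "w = p @ v @ q" "r = p' @ v @ q'" "length r < 2 * length v"
    using w sc unfolding dehn_presentation_def by blast
  have "m \<le> length v" using vr len by fastforce
  then have "take m v \<in> set (wins m w)" "take m v \<in> set (wins m r)"
    using win_mem vr by blast+
  then show False using chk vr by blast
qed

fun run :: "'a word list \<Rightarrow> 'a word \<Rightarrow> (nat \<times> 'a word) list \<Rightarrow> bool" where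
  "run L w [] = (w = [])"
| "run L w ((i, rr) # cs) = (rr \<in> set L \<and> run L (red (take i w @ rr @ drop i w)) cs)"

lemma run_sound:
  assumes sc: "symm_closure R = set L" and RX: "R \<subseteq> words_on X"
  shows "w \<in> words_on X \<Longrightarrow> run L w cs \<Longrightarrow> pres_eq X R w []"
proof (induct cs arbitrary: w)
  case Nil then show ?case by simp
next
  case (Cons c cs)
  obtain i rr where c: "c = (i, rr)" by (cases c)
  have rr: "rr \<in> symm_closure R" and rn: "run L (red (take i w @ rr @ drop i w)) cs"
    using Cons(3) c sc by auto
  have rrt: "rr \<in> words_on X" "pres_eq X R rr []" using symm_closure_trivial[OF RX rr] by auto
  have tw: "take i w \<in> words_on X" "drop i w \<in> words_on X"
    using Cons(2) by (auto simp: words_on_def dest: in_set_takeD in_set_dropD)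
  have ww: "take i w @ rr @ drop i w \<in> words_on X" using tw rrt by simp
  have e1: "pres_eq X R w (take i w @ rr @ drop i w)"
    using pe_sym[OF pe_ctx[OF rrt(2), where x="take i w" and y="drop i w"]] by simp
  have e2: "pres_eq X R (take i w @ rr @ drop i w) (red (take i w @ rr @ drop i w))"
    using red_sound[OF ww] .
  have e3: "pres_eq X R (red (take i w @ rr @ drop i w)) []"
    using Cons(1)[OF red_words[OF ww] rn] .
  show ?case using pe_trans[OF pe_trans[OF e1 e2] e3] .
qed

lemma red_check:
  assumes "w \<in> words_on X" "red w = [] \<or> red w \<in> R"
  shows "pres_eq X R w []"
proof -
  have "pres_eq X R (red w) []"
    using assms(2) pe_rel[of "red w" R X "[]" "[]"] by auto
  then show ?thesis using red_sound[OF assms(1)] pe_trans by blast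
qed

definition R0l :: "gen word list" where "R0l = [[P Ga, P Gb, N Ga, N Gb, P Gc, P Gd, N Gc, N Gd]]"
definition R1l :: "gen word list" where
  "R1l = [[P Ga, P Gb, N Ga, P Gr], [N Gr, N Gb, P Gc, P Gs], [N Gs, P Gd, N Gc, N Gd]]"
definition R2l :: "gen word list" where
  "R2l = [[P Ga, P Gb, P Gr], [N Gr, N Ga, P Gs], [N Gs, N Gb, P Gt],
         [N Gt, P Gc, P Gu], [N Gu, P Gd, P Gv], [N Gv, N Gc, N Gd]]"

lemma R0_set: "R0 = set R0l" by (simp only: R0_def R0l_def list.set)
lemma R1_set: "R1 = set R1l" by (simp only: R1_def R1l_def list.set)
lemma R2_set: "R2 = set R2l" by (simp only: R2_def R2l_def list.set)

lemma sc0: "symm_closure R0 = set (sc_list R0l)" by (simp only: R0_set symm_closure_list)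
lemma sc1: "symm_closure R1 = set (sc_list R1l)" by (simp only: R1_set symm_closure_list)
lemma sc2: "symm_closure R2 = set (sc_list R2l)" by (simp only: R2_set symm_closure_list)

lemma C1: "C_cond 4 R1"
  by (rule C_from_check[OF sc1, where n=4]) code_simp+

lemma C2: "C_cond 3 R2"
  by (rule C_from_check[OF sc2, where n=3]) code_simp+

lemma T1: "T_cond 5 R1"
  by (rule T_from_check[OF sc1]) code_simp

lemma T2: "T_cond 7 R2"
  by (rule T_from_check[OF sc2]) code_simp

definition psi :: "gen \<Rightarrow> gen word" where "psi x = [P x]"

definition phi1 :: "gen \<Rightarrow> gen word" where
  "phi1 x = (case x of Gr \<Rightarrow> [P Ga, N Gb, N Ga] | Gs \<Rightarrow> [P Gd, N Gc, N Gd] | _ \<Rightarrow> [P x])"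

definition phi2 :: "gen \<Rightarrow> gen word" where
  "phi2 x = (case x of Gr \<Rightarrow> [N Gb, N Ga] | Gs \<Rightarrow> [P Ga, N Gb, N Ga]
     | Gt \<Rightarrow> [P Gb, P Ga, N Gb, N Ga] | Gu \<Rightarrow> [N Gc, P Gb, P Ga, N Gb, N Ga]
     | Gv \<Rightarrow> [N Gc, N Gd] | _ \<Rightarrow> [P x])"

lemma subst_psi[simp]: "subst psi w = w"
  by (induct w) (auto simp: psi_def lsub_def linv_def)

lemma R0_words1: "R0 \<subseteq> words_on X0" by (simp add: R0_def X0_def)
lemma R1_words: "R1 \<subseteq> words_on X1" by (simp add: R1_def X1_def)
lemma R2_words: "R2 \<subseteq> words_on X2" by (simp add: R2_def X2_def)

lemma H1_1: "\<forall>x\<in>X1. phi1 x \<in> words_on X0" by (simp add: X1_def X0_def phi1_def)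
lemma H1_2: "\<forall>x\<in>X2. phi2 x \<in> words_on X0" by (simp add: X2_def X0_def phi2_def)
lemma H3_1: "\<forall>x\<in>X0. psi x \<in> words_on X1" by (simp add: X1_def X0_def psi_def)
lemma H3_2: "\<forall>x\<in>X0. psi x \<in> words_on X2" by (simp add: X2_def X0_def psi_def)
lemma H6_1: "\<forall>x\<in>X0. pres_eq X0 R0 (subst phi1 (psi x)) [(x, True)]"
  by (simp add: X0_def phi1_def psi_def lsub_def)
lemma H6_2: "\<forall>x\<in>X0. pres_eq X0 R0 (subst phi2 (psi x)) [(x, True)]"
  by (simp add: X0_def phi2_def psi_def lsub_def)

lemma H2_1: "\<forall>r\<in>R1. pres_eq X0 R0 (subst phi1 r) []"
proof
  fix r assume r: "r \<in> R1"
  show "pres_eq X0 R0 (subst phi1 r) []"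
  proof (rule red_check)
    show "subst phi1 r \<in> words_on X0" using subst_words[OF H1_1] R1_words r by blast
    show "red (subst phi1 r) = [] \<or> red (subst phi1 r) \<in> R0"
      using r unfolding R1_def R0_def by (auto simp: phi1_def lsub_def linv_def red_def)
  qed
qed

lemma H2_2: "\<forall>r\<in>R2. pres_eq X0 R0 (subst phi2 r) []"
proof
  fix r assume r: "r \<in> R2"
  show "pres_eq X0 R0 (subst phi2 r) []"
  proof (rule red_check)
    show "subst phi2 r \<in> words_on X0" using subst_words[OF H1_2] R2_words r by blast
    show "red (subst phi2 r) = [] \<or> red (subst phi2 r) \<in> R0"
      using r unfolding R2_def R0_def by (auto simp: phi2_def lsub_def linv_def red_def)
  qed
qed

lemma rel1: "r \<in> R1 \<Longrightarrow> pres_eq X1 R1 r []"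
  using pe_rel[of r R1 X1 "[]" "[]"] by simp
lemma rel2: "r \<in> R2 \<Longrightarrow> pres_eq X2 R2 r []"
  using pe_rel[of r R2 X2 "[]" "[]"] by simp

lemma solveR1: "u @ v \<in> R1 \<Longrightarrow> u \<in> words_on X1 \<Longrightarrow> v \<in> words_on X1 \<Longrightarrow> pres_eq X1 R1 v (winv u)"
  by (rule pe_solve_right[OF rel1])
lemma solveR2: "u @ v \<in> R2 \<Longrightarrow> u \<in> words_on X2 \<Longrightarrow> v \<in> words_on X2 \<Longrightarrow> pres_eq X2 R2 v (winv u)"
  by (rule pe_solve_right[OF rel2])
lemma solveL1: "v @ u \<in> R1 \<Longrightarrow> u \<in> words_on X1 \<Longrightarrow> v \<in> words_on X1 \<Longrightarrow> pres_eq X1 R1 u (winv v)"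
  by (rule pe_solve_left[OF pe_rot[OF rel1]])
lemma solveL2: "v @ u \<in> R2 \<Longrightarrow> u \<in> words_on X2 \<Longrightarrow> v \<in> words_on X2 \<Longrightarrow> pres_eq X2 R2 u (winv v)"
  by (rule pe_solve_left[OF pe_rot[OF rel2]])

lemma H5_1: "\<forall>x\<in>X1. pres_eq X1 R1 (subst psi (phi1 x)) [(x, True)]"
proof -
  have r: "pres_eq X1 R1 [P Gr] [P Ga, N Gb, N Ga]"
    using solveR1[of "[P Ga, P Gb, N Ga]" "[P Gr]"] by (simp add: R1_def X1_def linv_def)
  have s: "pres_eq X1 R1 [P Gd, N Gc, N Gd] [P Gs]"
    using solveL1[of "[N Gs]" "[P Gd, N Gc, N Gd]"] by (simp add: R1_def X1_def linv_def)
  show ?thesis using pe_sym[OF r] s by (simp add: X1_def phi1_def)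
qed

lemma H5_2: "\<forall>x\<in>X2. pres_eq X2 R2 (subst psi (phi2 x)) [(x, True)]"
proof -
  have r: "pres_eq X2 R2 [P Gr] [N Gb, N Ga]"
    using solveR2[of "[P Ga, P Gb]" "[P Gr]"] by (simp add: R2_def X2_def linv_def)
  have s1: "pres_eq X2 R2 [P Gs] [P Ga, P Gr]"
    using solveR2[of "[N Gr, N Ga]" "[P Gs]"] by (simp add: R2_def X2_def linv_def)
  have s: "pres_eq X2 R2 [P Gs] [P Ga, N Gb, N Ga]"
    using pe_trans[OF s1 pe_app[OF pe_refl[of X2 R2 "[P Ga]"] r, simplified]] by simp
  have t1: "pres_eq X2 R2 [P Gt] [P Gb, P Gs]"
    using solveR2[of "[N Gs, N Gb]" "[P Gt]"] by (simp add: R2_def X2_def linv_def)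
  have t: "pres_eq X2 R2 [P Gt] [P Gb, P Ga, N Gb, N Ga]"
    using pe_trans[OF t1 pe_app[OF pe_refl[of X2 R2 "[P Gb]"] s, simplified]] by simp
  have u1: "pres_eq X2 R2 [P Gu] [N Gc, P Gt]"
    using solveR2[of "[N Gt, P Gc]" "[P Gu]"] by (simp add: R2_def X2_def linv_def)
  have u: "pres_eq X2 R2 [P Gu] [N Gc, P Gb, P Ga, N Gb, N Ga]"
    using pe_trans[OF u1 pe_app[OF pe_refl[of X2 R2 "[N Gc]"] t, simplified]] by simp
  have v: "pres_eq X2 R2 [N Gc, N Gd] [P Gv]"
    using solveL2[of "[N Gv]" "[N Gc, N Gd]"] by (simp add: R2_def X2_def linv_def)
  show ?thesis using pe_sym[OF r] pe_sym[OF s] pe_sym[OF t] pe_sym[OF u] v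
    by (simp add: X2_def phi2_def)
qed

lemma H4_1: "\<forall>r\<in>R0. pres_eq X1 R1 (subst psi r) []"
proof -
  let ?r = "[N Gr, N Gb, P Gc, P Gs]"
  have a: "pres_eq X1 R1 (subst psi (subst phi1 ?r)) ?r"
    by (rule subst_back[OF H1_1 H3_1 H5_1]) (simp add: X1_def)
  have b: "subst phi1 ?r = [P Ga, P Gb, N Ga, N Gb, P Gc, P Gd, N Gc, N Gd]"
    by (simp add: phi1_def lsub_def linv_def)
  have "pres_eq X1 R1 ?r []" by (rule rel1) (simp add: R1_def)
  then show ?thesis using a b pe_trans unfolding R0_def by fastforce
qed

lemma H4_2: "\<forall>r\<in>R0. pres_eq X2 R2 (subst psi r) []"
proof -
  let ?r = "[N Gu, P Gd, P Gv]"
  have a: "pres_eq X2 R2 (subst psi (subst phi2 ?r)) ?r"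
    by (rule subst_back[OF H1_2 H3_2 H5_2]) (simp add: X2_def)
  have b: "subst phi2 ?r = [P Ga, P Gb, N Ga, N Gb, P Gc, P Gd, N Gc, N Gd]"
    by (simp add: phi2_def lsub_def linv_def)
  have "pres_eq X2 R2 ?r []" by (rule rel2) (simp add: R2_def)
  then show ?thesis using a b pe_trans unfolding R0_def by fastforce
qed

lemma iso1: "pres_group X1 R1 \<cong> pres_group X0 R0"
  by (rule iso_by_subst[OF H1_1 H2_1 H3_1 H4_1 H5_1 H6_1])

lemma iso2: "pres_group X2 R2 \<cong> pres_group X0 R0"
  by (rule iso_by_subst[OF H1_2 H2_2 H3_2 H4_2 H5_2 H6_2])

section \<open>Non-Dehn witnesses\<close>

definition w1 :: "gen word" where
  "w1 = [P Gb, N Ga, N Gb, P Gc, P Gd, N Gc, N Gc, N Gd, N Gr, N Gb, N Gd, N Gs, N Gs, P Gd, P Gs, N Gr, N Ga, P Gr, P Gr, P Ga, P Gc, P Gs, P Ga, P Gb]"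
definition cert1 :: "(nat \<times> gen word) list" where
  "cert1 = [(5, [N Gd, N Gc, P Gb, P Ga, N Gb, N Ga, P Gd, P Gc]), (6, [N Gb, N Ga, P Gd, P Gc, N Gd, N Gc, P Gb, P Ga]), (6, [N Ga, P Gd, P Gc, N Gd, N Gc, P Gb, P Ga, N Gb]), (5, [P Gc, N Gd, N Gc, P Gb, P Ga, N Gb, N Ga, P Gd])]"
definition w2 :: "gen word" where
  "w2 = [P Gb, N Ga, N Gb, P Gc, P Gd, N Gc, P Gv, N Gt, N Gd, N Gu, N Gv, P Gu, N Gs, P Gr, P Gs, P Ga, P Gt, N Gr]"
definition cert2 :: "(nat \<times> gen word) list" where
  "cert2 = [(5, [N Gd, N Gc, P Gb, P Ga, N Gb, N Ga, P Gd, P Gc]), (6, [N Gb, N Ga, P Gd, P Gc, N Gd, N Gc, P Gb, P Ga]), (6, [P Ga, N Gb, N Ga, P Gd, P Gc, N Gd, N Gc, P Gb])]"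

lemma w1_words: "w1 \<in> words_on X1" by (simp add: w1_def X1_def)
lemma w2_words: "w2 \<in> words_on X2" by (simp add: w2_def X2_def)

lemma w1_triv: "pres_eq X1 R1 w1 []"
proof -
  have sw: "subst phi1 w1 \<in> words_on X0" using subst_words[OF H1_1 w1_words] .
  have "run (sc_list R0l) (red (subst phi1 w1)) cert1"
    by (simp only: w1_def cert1_def) code_simp
  then have "pres_eq X0 R0 (red (subst phi1 w1)) []"
    by (rule run_sound[OF sc0 R0_words1 red_words[OF sw]])
  then have "pres_eq X0 R0 (subst phi1 w1) []" using red_sound[OF sw] pe_trans by blast
  then have "pres_eq X1 R1 (subst psi (subst phi1 w1)) (subst psi [])"
    by (rule subst_resp[OF H3_1 H4_1])
  then have "pres_eq X1 R1 (subst psi (subst phi1 w1)) []" by simp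
  then show ?thesis using pe_trans[OF pe_sym[OF subst_back[OF H1_1 H3_1 H5_1 w1_words]]] by blast
qed

lemma w2_triv: "pres_eq X2 R2 w2 []"
proof -
  have sw: "subst phi2 w2 \<in> words_on X0" using subst_words[OF H1_2 w2_words] .
  have "run (sc_list R0l) (red (subst phi2 w2)) cert2"
    by (simp only: w2_def cert2_def) code_simp
  then have "pres_eq X0 R0 (red (subst phi2 w2)) []"
    by (rule run_sound[OF sc0 R0_words1 red_words[OF sw]])
  then have "pres_eq X0 R0 (subst phi2 w2) []" using red_sound[OF sw] pe_trans by blast
  then have "pres_eq X2 R2 (subst psi (subst phi2 w2)) (subst psi [])"
    by (rule subst_resp[OF H3_2 H4_2])
  then have "pres_eq X2 R2 (subst psi (subst phi2 w2)) []" by simp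
  then show ?thesis using pe_trans[OF pe_sym[OF subst_back[OF H1_2 H3_2 H5_2 w2_words]]] by blast
qed

lemma nd1: "\<not> dehn_presentation X1 R1"
proof (rule nondehn_from_check[OF w1_words _ _ _ w1_triv sc1, where m=3])
  show "w1 \<noteq> []" "fr w1" "last w1 \<noteq> linv (hd w1)"
    by (simp_all add: w1_def linv_def)
  show "\<forall>r\<in>set (sc_list R1l). 2 * 3 \<le> length r + 2" by code_simp
  show "\<forall>x\<in>set (wins 3 w1). \<forall>r\<in>set (sc_list R1l). x \<notin> set (wins 3 r)"
    by (simp only: w1_def) code_simp
qed

lemma nd2: "\<not> dehn_presentation X2 R2"
proof (rule nondehn_from_check[OF w2_words _ _ _ w2_triv sc2, where m=2])
  show "w2 \<noteq> []" "fr w2" "last w2 \<noteq> linv (hd w2)"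
    by (simp_all add: w2_def linv_def)
  show "\<forall>r\<in>set (sc_list R2l). 2 * 2 \<le> length r + 2" by code_simp
  show "\<forall>x\<in>set (wins 2 w2). \<forall>r\<in>set (sc_list R2l). x \<notin> set (wins 2 r)"
    by (simp only: w2_def) code_simp
qed

theorem mainTheorem7:
  shows "C_cond 4 R1 \<and> T_cond 5 R1 \<and> C_cond 3 R2 \<and> T_cond 7 R2
    \<and> pres_group X1 R1 \<cong> pres_group X0 R0 \<and> pres_group X2 R2 \<cong> pres_group X0 R0
    \<and> \<not> dehn_presentation X1 R1 \<and> \<not> dehn_presentation X2 R2"
  using C1 T1 C2 T2 iso1 iso2 nd1 nd2 by blast

end
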